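(* Let $n\ge 1$ and let $G^n$ be the set of all $C^\infty$ diffeomorphisms $\mathbf{Y}:\mathbb{R}^n\setminus\{0\}\to\mathbb{R}^n\setminus\{0\}$ satisfying $\mathbf{Y}(\lambda\mathbf{x})=\lambda\mathbf{Y}(\mathbf{x})$ for all $\mathbf{x}\in\mathbb{R}^n\setminus\{0\}$ and all $\lambda\in\mathbb{R}\setminus\{0\}$; $G^n$ is a group under composition, where for $g_1,g_2\in G^n$ with associated maps $\mathbf{Y}_{g_1},\mathbf{Y}_{g_2}$ the product is defined by $\mathbf{Y}_{g_1g_2}=\mathbf{Y}_{g_1}\circ\mathbf{Y}_{g_2}$. Let $N^n\subset G^n$ be the subset of those elements $g$ whose map has the form $\mathbf{Y}_g(\mathbf{x})=\mathbf{x}\,r_g(\mathbf{x})$, where $r_g:\mathbb{R}^n\setminus\{0\}\to(0,\infty)$ is a $C^\infty$ function with $r_g(\lambda\mathbf{x})=r_g(\mathbf{x})$ for all $\lambda\in\mathbb{R}\setminus\{0\}$. Then $N^n$ is a normal abelian subgroup of $G^n$, and for all $g,g_1,g_2\in N^n$ and all $\mathbf{x}\in\mathbb{R}^n\setminus\{0\}$, $$r_{g_1g_2}(\mathbf{x})=r_{g_1}(\mathbf{x})\,r_{g_2}(\mathbf{x}),\qquad r_{g^{-1}}(\mathbf{x})=\frac{1}{r_g(\mathbf{x})}.$$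
   Context: $G^n$ is called the group of Thermodynamic Coordinate Transformations (TCT-group): homogeneous (degree one) diffeomorphisms of $\mathbb{R}^n\setminus\{0\}$. Elements $g$ of $G^n$ are identified with their maps $\mathbf{Y}_g$, and the group law is composition of maps. *)

theory Defs
  imports "HOL-Analysis.Analysis" "HOL-Algebra.Algebra"
begin

(* C^k on an open set S via iterated Frechet derivatives in the basis directions
   (i.e. all partial derivatives up to order k exist and are continuous). *)
fun Ck_on :: "nat \<Rightarrow> ('a::euclidean_space) set \<Rightarrow> ('a \<Rightarrow> 'b::real_normed_vector) \<Rightarrow> bool" where
  "Ck_on 0 S f = continuous_on S f"
| "Ck_on (Suc k) S f = (f differentiable_on S \<and>
      (\<forall>b\<in>Basis. Ck_on k S (\<lambda>x. frechet_derivative f (at x) b)))"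

definition smooth_on :: "('a::euclidean_space) set \<Rightarrow> ('a \<Rightarrow> 'b::real_normed_vector) \<Rightarrow> bool" where
  "smooth_on S f \<longleftrightarrow> (\<forall>k. Ck_on k S f)"

definition punctured :: "(real^'n) set" where
  "punctured = UNIV - {0}"

definition diffeo_on :: "(real^'n) set \<Rightarrow> (real^'n \<Rightarrow> real^'n) \<Rightarrow> bool" where
  "diffeo_on S Y \<longleftrightarrow> bij_betw Y S S \<and> smooth_on S Y \<and> smooth_on S (inv_into S Y)"

(* Elements of G^n: homogeneous (degree one) C^\<infinity> diffeomorphisms of R^n \ {0}.
   Convention: maps are represented as total functions extended by Y 0 = 0. *)
definition TCT_maps :: "(real^'n \<Rightarrow> real^'n) set" where
  "TCT_maps = {Y. diffeo_on punctured Y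
      \<and> (\<forall>x\<in>punctured. \<forall>l::real. l \<noteq> 0 \<longrightarrow> Y (l *\<^sub>R x) = l *\<^sub>R Y x)
      \<and> Y 0 = 0}"

definition TCT_group :: "(real^'n \<Rightarrow> real^'n) monoid" where
  "TCT_group = \<lparr>carrier = TCT_maps, mult = (\<lambda>Y1 Y2. Y1 \<circ> Y2), one = id\<rparr>"

definition radial_factor :: "(real^'n \<Rightarrow> real^'n) \<Rightarrow> (real^'n \<Rightarrow> real) \<Rightarrow> bool" where
  "radial_factor Y r \<longleftrightarrow> smooth_on punctured r
      \<and> (\<forall>x\<in>punctured. r x > 0)
      \<and> (\<forall>x\<in>punctured. \<forall>l::real. l \<noteq> 0 \<longrightarrow> r (l *\<^sub>R x) = r x)
      \<and> (\<forall>x\<in>punctured. Y x = r x *\<^sub>R x)"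

definition N_set :: "(real^'n \<Rightarrow> real^'n) set" where
  "N_set = {Y \<in> TCT_maps. \<exists>r. radial_factor Y r}"

end

theory Submission
  imports Defs
begin

lemma Ck_mono: "Ck_on (Suc k) S f \<Longrightarrow> Ck_on k S f"
proof (induction k arbitrary: f)
  case 0 thus ?case by (simp add: differentiable_imp_continuous_on)
next
  case (Suc k) thus ?case by (metis Ck_on.simps(2))
qed

lemma Ck_cont: "Ck_on k S f \<Longrightarrow> continuous_on S f"
  by (cases k) (auto simp: differentiable_imp_continuous_on)

lemma hd_at: "open S \<Longrightarrow> f differentiable_on S \<Longrightarrow> x \<in> S \<Longrightarrow>
   (f has_derivative frechet_derivative f (at x)) (at x)"
  using differentiable_on_eq_differentiable_at frechet_derivative_works by blast

lemma Dv_eq: "(f has_derivative f') (at x) \<Longrightarrow> frechet_derivative f (at x) = f'"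
  by (simp add: frechet_derivative_at[symmetric])

lemma diff_onI: "open S \<Longrightarrow> (\<And>x. x \<in> S \<Longrightarrow> (f has_derivative f' x) (at x)) \<Longrightarrow> f differentiable_on S"
  using differentiable_on_eq_differentiable_at differentiable_def by blast

lemma Ck_cong: fixes f g :: "'a::euclidean_space \<Rightarrow> 'b::real_normed_vector"
  assumes "open S" "\<And>x. x\<in>S \<Longrightarrow> f x = g x" "Ck_on k S f" shows "Ck_on k S g"
  using assms
proof (induction k arbitrary: f g)
  case 0 thus ?case using continuous_on_cong by (metis Ck_on.simps(1))
next
  case (Suc k)
  have d: "f differentiable_on S" using Suc.prems by simp
  have hg: "\<And>x. x \<in> S \<Longrightarrow> (g has_derivative frechet_derivative f (at x)) (at x)"
    using has_derivative_transform_within_open[OF hd_at[OF Suc.prems(1) d] Suc.prems(1)] Suc.prems(2)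
    by blast
  have dg: "g differentiable_on S" using diff_onI[OF Suc.prems(1) hg] .
  have e: "\<And>x b. x \<in> S \<Longrightarrow> frechet_derivative f (at x) b = frechet_derivative g (at x) b"
    using Dv_eq[OF hg] by simp
  have "\<forall>b\<in>Basis. Ck_on k S (\<lambda>x. frechet_derivative g (at x) b)"
  proof
    fix b :: 'a assume "b \<in> Basis"
    then have hh: "Ck_on k S (\<lambda>x. frechet_derivative f (at x) b)" using Suc.prems(3) by simp
    show "Ck_on k S (\<lambda>x. frechet_derivative g (at x) b)"
      by (rule Suc.IH[OF Suc.prems(1) _ hh]) (erule e)
  qed
  then show ?case using dg by simp
qed

lemma Ck_const: "Ck_on k S (\<lambda>x. c)"
proof (induction k arbitrary: c)
  case 0 thus ?case by simp
next
  case (Suc k) thus ?case by simp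
qed

lemma Ck_ident: "Ck_on k S (\<lambda>x. x)"
proof (induction k)
  case 0 thus ?case by simp
next
  case (Suc k) thus ?case by (simp add: Ck_const)
qed

lemma Ck_add: "open S \<Longrightarrow> Ck_on k S f \<Longrightarrow> Ck_on k S g \<Longrightarrow> Ck_on k S (\<lambda>x. f x + g x)"
  for f g :: "'a::euclidean_space \<Rightarrow> 'b::real_normed_vector"
proof (induction k arbitrary: f g)
  case 0 thus ?case by (simp add: continuous_on_add)
next
  case (Suc k)
  have df: "f differentiable_on S" and dg: "g differentiable_on S" using Suc.prems by auto
  have e: "\<And>x b. x \<in> S \<Longrightarrow> frechet_derivative f (at x) b + frechet_derivative g (at x) b
      = frechet_derivative (\<lambda>x. f x + g x) (at x) b"
    using Dv_eq[OF has_derivative_add[OF hd_at[OF Suc.prems(1) df] hd_at[OF Suc.prems(1) dg]]] by simp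
  have "\<forall>b\<in>Basis. Ck_on k S (\<lambda>x. frechet_derivative (\<lambda>x. f x + g x) (at x) b)"
  proof
    fix b :: 'a assume b: "b \<in> Basis"
    have hh: "Ck_on k S (\<lambda>x. frechet_derivative f (at x) b + frechet_derivative g (at x) b)"
      using Suc.IH[OF Suc.prems(1)] Suc.prems(2,3) b by simp
    show "Ck_on k S (\<lambda>x. frechet_derivative (\<lambda>x. f x + g x) (at x) b)"
      by (rule Ck_cong[OF Suc.prems(1) _ hh]) (erule e)
  qed
  then show ?case using df dg by (simp add: differentiable_on_add)
qed

lemma Ck_scaleR: "open S \<Longrightarrow> Ck_on k S f \<Longrightarrow> Ck_on k S g \<Longrightarrow> Ck_on k S (\<lambda>x. f x *\<^sub>R g x)"
  for f :: "'a::euclidean_space \<Rightarrow> real" and g :: "'a \<Rightarrow> 'b::real_normed_vector"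
proof (induction k arbitrary: f g)
  case 0 thus ?case by (simp add: continuous_on_scaleR)
next
  case (Suc k)
  have df: "f differentiable_on S" and dg: "g differentiable_on S" using Suc.prems by auto
  have e: "\<And>x b. x \<in> S \<Longrightarrow> f x *\<^sub>R frechet_derivative g (at x) b + frechet_derivative f (at x) b *\<^sub>R g x
      = frechet_derivative (\<lambda>x. f x *\<^sub>R g x) (at x) b"
    using Dv_eq[OF has_derivative_scaleR[OF hd_at[OF Suc.prems(1) df] hd_at[OF Suc.prems(1) dg]]] by simp
  have fk: "Ck_on k S f" "Ck_on k S g" using Suc.prems Ck_mono by blast+
  have "\<forall>b\<in>Basis. Ck_on k S (\<lambda>x. frechet_derivative (\<lambda>x. f x *\<^sub>R g x) (at x) b)"
  proof
    fix b :: 'a assume b: "b \<in> Basis"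
    have hh: "Ck_on k S (\<lambda>x. f x *\<^sub>R frechet_derivative g (at x) b + frechet_derivative f (at x) b *\<^sub>R g x)"
      using Ck_add[OF Suc.prems(1) Suc.IH[OF Suc.prems(1) fk(1)] Suc.IH[OF Suc.prems(1) _ fk(2)]] Suc.prems(2,3) b by simp
    show "Ck_on k S (\<lambda>x. frechet_derivative (\<lambda>x. f x *\<^sub>R g x) (at x) b)"
      by (rule Ck_cong[OF Suc.prems(1) _ hh]) (erule e)
  qed
  then show ?case using df dg by (simp add: differentiable_on_scaleR)
qed

lemma Ck_linear: "open S \<Longrightarrow> bounded_linear L \<Longrightarrow> Ck_on k S h \<Longrightarrow> Ck_on k S (\<lambda>x. L (h x))"
  for h :: "'a::euclidean_space \<Rightarrow> 'c::real_normed_vector" and L :: "'c \<Rightarrow> 'b::real_normed_vector"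
proof (induction k arbitrary: h)
  case 0 thus ?case
    by (simp add: bounded_linear.continuous_on)
next
  case (Suc k)
  have dh: "h differentiable_on S" using Suc.prems by auto
  have hd: "\<And>x. x \<in> S \<Longrightarrow> ((\<lambda>x. L (h x)) has_derivative (\<lambda>v. L (frechet_derivative h (at x) v))) (at x)"
    using bounded_linear.has_derivative[OF Suc.prems(2) hd_at[OF Suc.prems(1) dh]] by blast
  have e: "\<And>x b. x \<in> S \<Longrightarrow> L (frechet_derivative h (at x) b)
      = frechet_derivative (\<lambda>x. L (h x)) (at x) b"
    using Dv_eq[OF hd] by simp
  have d: "(\<lambda>x. L (h x)) differentiable_on S" by (rule diff_onI[OF Suc.prems(1) hd])
  have "\<forall>b\<in>Basis. Ck_on k S (\<lambda>x. frechet_derivative (\<lambda>x. L (h x)) (at x) b)"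
  proof
    fix b :: 'a assume b: "b \<in> Basis"
    have hh: "Ck_on k S (\<lambda>x. L (frechet_derivative h (at x) b))"
      using Suc.IH[OF Suc.prems(1,2)] Suc.prems(3) b by simp
    show "Ck_on k S (\<lambda>x. frechet_derivative (\<lambda>x. L (h x)) (at x) b)"
      by (rule Ck_cong[OF Suc.prems(1) _ hh]) (erule e)
  qed
  then show ?case using d by simp
qed

lemma Ck_sum: assumes "open S" "finite I" "\<And>i. i \<in> I \<Longrightarrow> Ck_on k S (f i)"
  shows "Ck_on k S (\<lambda>x. \<Sum>i\<in>I. f i x)"
  using assms(2,3)
proof (induction I rule: finite_induct)
  case empty thus ?case by (simp add: Ck_const)
next
  case (insert a F) thus ?case by (simp add: Ck_add[OF assms(1)])
qed

lemma Ck_compose: "open S \<Longrightarrow> open T \<Longrightarrow> f ` S \<subseteq> T \<Longrightarrow> Ck_on k S f \<Longrightarrow> Ck_on k T g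
   \<Longrightarrow> Ck_on k S (\<lambda>x. g (f x))"
  for f :: "'a::euclidean_space \<Rightarrow> 'c::euclidean_space" and g :: "'c \<Rightarrow> 'b::real_normed_vector"
proof (induction k arbitrary: f g)
  case 0 thus ?case using continuous_on_compose2[of T g S f] by simp
next
  case (Suc k)
  have df: "f differentiable_on S" and dg: "g differentiable_on T" using Suc.prems by auto
  have dfa: "\<And>x. x \<in> S \<Longrightarrow> f differentiable at x"
    using df Suc.prems(1) differentiable_on_eq_differentiable_at by blast
  have dga: "\<And>x. x \<in> S \<Longrightarrow> g differentiable at (f x)"
    using dg Suc.prems(2,3) differentiable_on_eq_differentiable_at by blast
  have e: "\<And>x b. x \<in> S \<Longrightarrow> (\<Sum>j\<in>Basis. (frechet_derivative f (at x) b \<bullet> j) *\<^sub>R frechet_derivative g (at (f x)) j)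
      = frechet_derivative (\<lambda>x. g (f x)) (at x) b"
  proof -
    fix x b assume x: "x \<in> S"
    have lin: "linear (frechet_derivative g (at (f x)))"
      using dga[OF x] linear_frechet_derivative by blast
    have "frechet_derivative (\<lambda>x. g (f x)) (at x) b = frechet_derivative g (at (f x)) (frechet_derivative f (at x) b)"
      using frechet_derivative_compose[OF dfa[OF x] dga[OF x]] by (simp add: o_def)
    also have "\<dots> = frechet_derivative g (at (f x)) (\<Sum>j\<in>Basis. (frechet_derivative f (at x) b \<bullet> j) *\<^sub>R j)"
      by (simp add: euclidean_representation)
    also have "\<dots> = (\<Sum>j\<in>Basis. (frechet_derivative f (at x) b \<bullet> j) *\<^sub>R frechet_derivative g (at (f x)) j)"
      by (simp add: real_vector.linear_sum[OF lin] linear_cmul[OF lin])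
    finally show "(\<Sum>j\<in>Basis. (frechet_derivative f (at x) b \<bullet> j) *\<^sub>R frechet_derivative g (at (f x)) j)
      = frechet_derivative (\<lambda>x. g (f x)) (at x) b" by simp
  qed
  have d: "(\<lambda>x. g (f x)) differentiable_on S"
    unfolding differentiable_on_eq_differentiable_at[OF Suc.prems(1)]
    using differentiable_chain_at[OF dfa dga] by (simp add: o_def)
  have fk: "Ck_on k S f" using Suc.prems(4) Ck_mono by blast
  have t1: "\<And>b j. b \<in> Basis \<Longrightarrow> Ck_on k S (\<lambda>x. frechet_derivative f (at x) b \<bullet> j)"
  proof -
    fix b j assume b: "(b::'a) \<in> Basis"
    have "Ck_on k S (\<lambda>x. frechet_derivative f (at x) b)" using Suc.prems(4) b by simp
    then show "Ck_on k S (\<lambda>x. frechet_derivative f (at x) b \<bullet> j)"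
      using Ck_linear[OF Suc.prems(1) bounded_linear_inner_left] by blast
  qed
  have t2: "\<And>j. j \<in> Basis \<Longrightarrow> Ck_on k S (\<lambda>x. frechet_derivative g (at (f x)) j)"
  proof -
    fix j assume j: "(j::'c) \<in> Basis"
    have "Ck_on k T (\<lambda>y. frechet_derivative g (at y) j)" using Suc.prems(5) j by simp
    then show "Ck_on k S (\<lambda>x. frechet_derivative g (at (f x)) j)"
      using Suc.IH[OF Suc.prems(1,2,3) fk] by blast
  qed
  have "\<forall>b\<in>Basis. Ck_on k S (\<lambda>x. frechet_derivative (\<lambda>x. g (f x)) (at x) b)"
  proof
    fix b assume b: "(b::'a) \<in> Basis"
    have hh: "Ck_on k S (\<lambda>x. \<Sum>j\<in>Basis. (frechet_derivative f (at x) b \<bullet> j) *\<^sub>R frechet_derivative g (at (f x)) j)"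
      by (rule Ck_sum[OF Suc.prems(1) finite_Basis], rule Ck_scaleR[OF Suc.prems(1) t1[OF b] t2])
    show "Ck_on k S (\<lambda>x. frechet_derivative (\<lambda>x. g (f x)) (at x) b)"
      by (rule Ck_cong[OF Suc.prems(1) _ hh]) (erule e)
  qed
  then show ?case using d by simp
qed

lemma Ck_inverse: "Ck_on k {0<..} (inverse :: real \<Rightarrow> real)"
proof (induction k)
  case 0 thus ?case by (auto intro!: continuous_on_inverse continuous_on_id)
next
  case (Suc k)
  have hd: "\<And>x::real. x \<in> {0<..} \<Longrightarrow> (inverse has_derivative (\<lambda>h. - (inverse x * h * inverse x))) (at x)"
  proof -
    fix x :: real assume "x \<in> {0<..}"
    then have "x \<noteq> 0" by simp
    then show "(inverse has_derivative (\<lambda>h. - (inverse x * h * inverse x))) (at x)"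
      by (rule has_derivative_inverse')
  qed
  have e: "\<And>x b::real. x \<in> {0<..} \<Longrightarrow> (-b) *\<^sub>R (inverse x *\<^sub>R inverse x)
      = frechet_derivative (inverse::real\<Rightarrow>real) (at x) b"
    using Dv_eq[OF hd] by (simp add: algebra_simps)
  have d: "inverse differentiable_on {0::real<..}"
    by (rule diff_onI[OF open_greaterThan hd])
  have "\<forall>b\<in>Basis. Ck_on k {0<..} (\<lambda>x::real. frechet_derivative inverse (at x) b)"
  proof
    fix b :: real
    have hh: "Ck_on k {0<..} (\<lambda>x::real. (-b) *\<^sub>R (inverse x *\<^sub>R inverse x))"
      by (rule Ck_scaleR[OF open_greaterThan Ck_const Ck_scaleR[OF open_greaterThan Suc.IH Suc.IH]])
    show "Ck_on k {0<..} (\<lambda>x::real. frechet_derivative inverse (at x) b)"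
      by (rule Ck_cong[OF open_greaterThan _ hh]) (erule e)
  qed
  then show ?case using d by simp
qed

lemma smooth_cong: "open S \<Longrightarrow> (\<And>x. x \<in> S \<Longrightarrow> f x = g x) \<Longrightarrow> smooth_on S f \<Longrightarrow> smooth_on S g"
  for f g :: "'a::euclidean_space \<Rightarrow> 'b::real_normed_vector"
  unfolding smooth_on_def using Ck_cong by blast

lemma smooth_compose: "open S \<Longrightarrow> open T \<Longrightarrow> f ` S \<subseteq> T \<Longrightarrow> smooth_on S f \<Longrightarrow> smooth_on T g
   \<Longrightarrow> smooth_on S (\<lambda>x. g (f x))"
  for f :: "'a::euclidean_space \<Rightarrow> 'c::euclidean_space" and g :: "'c \<Rightarrow> 'b::real_normed_vector"
  unfolding smooth_on_def using Ck_compose by blast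

lemma smooth_mult: "open S \<Longrightarrow> smooth_on S f \<Longrightarrow> smooth_on S g \<Longrightarrow> smooth_on S (\<lambda>x. f x * g x)"
  for f g :: "'a::euclidean_space \<Rightarrow> real"
  unfolding smooth_on_def using Ck_scaleR[of S _ f g] by simp

lemma smooth_const: "smooth_on S (\<lambda>x. c)"
  unfolding smooth_on_def using Ck_const by blast

lemma smooth_ident: "smooth_on S (\<lambda>x. x)"
  unfolding smooth_on_def using Ck_ident by blast

lemma smooth_inverse_pos: "open S \<Longrightarrow> smooth_on S r \<Longrightarrow> (\<And>x. x \<in> S \<Longrightarrow> r x > 0)
   \<Longrightarrow> smooth_on S (\<lambda>x. inverse (r x))"
  for r :: "'a::euclidean_space \<Rightarrow> real"
  by (rule smooth_compose[where T="{0<..}"]) (auto simp: smooth_on_def Ck_inverse)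

lemma open_punct: "open (punctured :: (real^'n) set)"
  unfolding punctured_def by (simp add: open_Diff)

lemma mem_punct: "x \<in> punctured \<longleftrightarrow> x \<noteq> 0"
  unfolding punctured_def by simp

definition einv :: "(real^'n \<Rightarrow> real^'n) \<Rightarrow> (real^'n \<Rightarrow> real^'n)" where
  "einv Y = (\<lambda>x. if x = 0 then 0 else inv_into punctured Y x)"

lemma TCT_D:
  assumes "Y \<in> TCT_maps"
  shows "bij_betw Y punctured punctured" "smooth_on punctured Y"
    "smooth_on punctured (inv_into punctured Y)" "Y 0 = 0"
    "\<And>x l. x \<in> punctured \<Longrightarrow> l \<noteq> 0 \<Longrightarrow> Y (l *\<^sub>R x) = l *\<^sub>R Y x"
  using assms unfolding TCT_maps_def diffeo_on_def by auto

lemma TCT_in_punct: "Y \<in> TCT_maps \<Longrightarrow> x \<in> punctured \<Longrightarrow> Y x \<in> punctured"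
  using TCT_D(1) bij_betwE by blast

lemma einv_props:
  assumes Y: "Y \<in> TCT_maps"
  shows "einv Y \<in> TCT_maps" "\<And>x. einv Y (Y x) = x" "\<And>x. Y (einv Y x) = x"
proof -
  note b = TCT_D(1)[OF Y]
  show lft: "\<And>x. einv Y (Y x) = x"
  proof -
    fix x show "einv Y (Y x) = x"
    proof (cases "x = 0")
      case True thus ?thesis using TCT_D(4)[OF Y] by (simp add: einv_def)
    next
      case False
      then have "x \<in> punctured" "Y x \<in> punctured" using TCT_in_punct[OF Y] by (auto simp: mem_punct)
      then show ?thesis using bij_betw_inv_into_left[OF b] by (auto simp: einv_def mem_punct)
    qed
  qed
  show r: "\<And>x. Y (einv Y x) = x"
  proof -
    fix x show "Y (einv Y x) = x"
    proof (cases "x = 0")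
      case True thus ?thesis using TCT_D(4)[OF Y] by (simp add: einv_def)
    next
      case False
      then show ?thesis using bij_betw_inv_into_right[OF b] by (auto simp: einv_def mem_punct)
    qed
  qed
  have eq: "\<And>x. x \<in> punctured \<Longrightarrow> inv_into punctured Y x = einv Y x"
    by (auto simp: einv_def mem_punct)
  have bi: "bij_betw (einv Y) punctured punctured"
    using bij_betw_inv_into[OF b] bij_betw_cong[of punctured "inv_into punctured Y" "einv Y"] eq by blast
  have s1: "smooth_on punctured (einv Y)"
    by (rule smooth_cong[OF open_punct eq TCT_D(3)[OF Y]])
  have eq2: "\<And>x. x \<in> punctured \<Longrightarrow> Y x = inv_into punctured (einv Y) x"
  proof -
    fix x :: "real^'a" assume x: "x \<in> punctured"
    show "Y x = inv_into punctured (einv Y) x"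
      by (rule inv_into_f_eq[symmetric, OF bij_betw_imp_inj_on[OF bi] TCT_in_punct[OF Y x] lft])
  qed
  have s2: "smooth_on punctured (inv_into punctured (einv Y))"
    by (rule smooth_cong[OF open_punct eq2 TCT_D(2)[OF Y]])
  have h: "\<And>x l. x \<in> punctured \<Longrightarrow> l \<noteq> 0 \<Longrightarrow> einv Y (l *\<^sub>R x) = l *\<^sub>R einv Y x"
  proof -
    fix x :: "real^'a" and l :: real assume x: "x \<in> punctured" and l: "l \<noteq> 0"
    have "Y (l *\<^sub>R einv Y x) = l *\<^sub>R x"
      using TCT_D(5)[OF Y _ l, of "einv Y x"] bi x r by (metis bij_betwE)
    then have "einv Y (l *\<^sub>R x) = einv Y (Y (l *\<^sub>R einv Y x))" by simp
    then show "einv Y (l *\<^sub>R x) = l *\<^sub>R einv Y x" using lft by simp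
  qed
  show "einv Y \<in> TCT_maps"
    unfolding TCT_maps_def diffeo_on_def using bi s1 s2 h by (simp add: einv_def)
qed

lemma TCT_comp:
  assumes Y1: "Y1 \<in> TCT_maps" and Y2: "Y2 \<in> TCT_maps"
  shows "Y1 \<circ> Y2 \<in> TCT_maps"
proof -
  have bi: "bij_betw (Y1 \<circ> Y2) punctured punctured"
    using bij_betw_trans[OF TCT_D(1)[OF Y2] TCT_D(1)[OF Y1]] .
  have s1: "smooth_on punctured (Y1 \<circ> Y2)"
    unfolding o_def
    by (rule smooth_compose[OF open_punct open_punct _ TCT_D(2)[OF Y2] TCT_D(2)[OF Y1]])
       (use TCT_in_punct[OF Y2] in auto)
  have eq: "\<And>x. x \<in> punctured \<Longrightarrow> einv Y2 (einv Y1 x) = inv_into punctured (Y1 \<circ> Y2) x"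
  proof -
    fix x :: "real^'a" assume x: "x \<in> punctured"
    have "einv Y2 (einv Y1 x) \<in> punctured"
      using TCT_in_punct[OF einv_props(1)[OF Y2] TCT_in_punct[OF einv_props(1)[OF Y1] x]] .
    moreover have "(Y1 \<circ> Y2) (einv Y2 (einv Y1 x)) = x" using einv_props(3)[OF Y1] einv_props(3)[OF Y2] by simp
    ultimately show "einv Y2 (einv Y1 x) = inv_into punctured (Y1 \<circ> Y2) x"
      using inv_into_f_eq[OF bij_betw_imp_inj_on[OF bi]] by metis
  qed
  have s3: "smooth_on punctured (\<lambda>x. einv Y2 (einv Y1 x))"
    by (rule smooth_compose[OF open_punct open_punct _ TCT_D(2)[OF einv_props(1)[OF Y1]] TCT_D(2)[OF einv_props(1)[OF Y2]]])
       (use TCT_in_punct[OF einv_props(1)[OF Y1]] in auto)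
  have s2: "smooth_on punctured (inv_into punctured (Y1 \<circ> Y2))"
    by (rule smooth_cong[OF open_punct eq s3])
  have h: "\<And>x l. x \<in> punctured \<Longrightarrow> l \<noteq> 0 \<Longrightarrow> (Y1 \<circ> Y2) (l *\<^sub>R x) = l *\<^sub>R (Y1 \<circ> Y2) x"
    using TCT_D(5)[OF Y1] TCT_D(5)[OF Y2] TCT_in_punct[OF Y2] by simp
  show ?thesis
    unfolding TCT_maps_def diffeo_on_def using bi s1 s2 h TCT_D(4)[OF Y1] TCT_D(4)[OF Y2] by simp
qed

lemma id_TCT: "id \<in> TCT_maps"
proof -
  have eq: "\<And>x::real^'a. x \<in> punctured \<Longrightarrow> x = inv_into punctured (\<lambda>x. x) x"
    by (rule inv_into_f_eq[symmetric]) auto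
  have s: "smooth_on punctured (inv_into punctured (\<lambda>x::real^'a. x))"
    by (rule smooth_cong[OF open_punct eq smooth_ident])
  have b: "bij_betw (\<lambda>x::real^'a. x) punctured punctured" by (simp add: bij_betw_def)
  show ?thesis unfolding TCT_maps_def diffeo_on_def
    using s b smooth_ident by (simp add: id_def)
qed

lemma TCT_carrier[simp]: "carrier TCT_group = TCT_maps"
  and TCT_mult[simp]: "x \<otimes>\<^bsub>TCT_group\<^esub> y = x \<circ> y"
  and TCT_one[simp]: "\<one>\<^bsub>TCT_group\<^esub> = id"
  by (simp_all add: TCT_group_def)

lemma TCT_is_group: "group TCT_group"
proof (rule groupI)
  fix x assume "x \<in> carrier TCT_group"
  then show "\<exists>y\<in>carrier TCT_group. y \<otimes>\<^bsub>TCT_group\<^esub> x = \<one>\<^bsub>TCT_group\<^esub>"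
    using einv_props[of x] by (auto intro!: bexI[of _ "einv x"])
qed (auto simp: TCT_comp id_TCT o_assoc)

lemma TCT_inv: "Y \<in> TCT_maps \<Longrightarrow> inv\<^bsub>TCT_group\<^esub> Y = einv Y"
  by (rule group.inv_equality[OF TCT_is_group]) (auto simp: einv_props)

lemma rad_D: assumes "radial_factor Y r"
  shows "smooth_on punctured r" "\<And>x. x \<in> punctured \<Longrightarrow> r x > 0"
    "\<And>x l. x \<in> punctured \<Longrightarrow> l \<noteq> 0 \<Longrightarrow> r (l *\<^sub>R x) = r x"
    "\<And>x. x \<in> punctured \<Longrightarrow> Y x = r x *\<^sub>R x"
  using assms unfolding radial_factor_def by auto

lemma rad_comp: assumes "radial_factor Y1 r1" "radial_factor Y2 r2" "x \<in> punctured"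
  shows "Y1 (Y2 x) = (r1 x * r2 x) *\<^sub>R x"
proof -
  have p: "r2 x > 0" using rad_D(2)[OF assms(2,3)] .
  have "r2 x *\<^sub>R x \<in> punctured" using p assms(3) by (simp add: mem_punct)
  then show ?thesis using rad_D(4)[OF assms(1)] rad_D(4)[OF assms(2,3)] rad_D(3)[OF assms(1) assms(3)] p
    by simp
qed

lemma N_mult: assumes "Y1 \<in> N_set" "Y2 \<in> N_set" shows "Y1 \<circ> Y2 \<in> N_set"
proof -
  obtain r1 r2 where r: "radial_factor Y1 r1" "radial_factor Y2 r2" using assms by (auto simp: N_set_def)
  have "radial_factor (Y1 \<circ> Y2) (\<lambda>x. r1 x * r2 x)"
    unfolding radial_factor_def
    using smooth_mult[OF open_punct rad_D(1)[OF r(1)] rad_D(1)[OF r(2)]] rad_D(2)[OF r(1)] rad_D(2)[OF r(2)]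
      rad_D(3)[OF r(1)] rad_D(3)[OF r(2)] rad_comp[OF r] by simp
  then show ?thesis using TCT_comp assms by (auto simp: N_set_def)
qed

lemma N_inv: assumes "Y \<in> N_set" shows "einv Y \<in> N_set"
proof -
  obtain r where r: "radial_factor Y r" and Y: "Y \<in> TCT_maps" using assms by (auto simp: N_set_def)
  have v: "\<And>x. x \<in> punctured \<Longrightarrow> einv Y x = inverse (r x) *\<^sub>R x"
  proof -
    fix x :: "real^'a" assume x: "x \<in> punctured"
    define z where "z = einv Y x"
    have z: "z \<in> punctured" using TCT_in_punct[OF einv_props(1)[OF Y] x] z_def by simp
    have rz: "r z > 0" using rad_D(2)[OF r z] .
    have "r z *\<^sub>R z = x" using rad_D(4)[OF r z] einv_props(3)[OF Y] z_def by simp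
    then have zx: "z = inverse (r z) *\<^sub>R x" using rz by auto
    then have "r z = r x" using rad_D(3)[OF r x, of "inverse (r z)"] rz by simp
    then show "einv Y x = inverse (r x) *\<^sub>R x" using zx z_def by simp
  qed
  have "radial_factor (einv Y) (\<lambda>x. inverse (r x))"
    unfolding radial_factor_def
    using smooth_inverse_pos[OF open_punct rad_D(1)[OF r] rad_D(2)[OF r]] rad_D(2)[OF r] rad_D(3)[OF r] v
    by simp
  then show ?thesis using einv_props(1)[OF Y] by (auto simp: N_set_def)
qed

lemma N_conj: assumes Xa: "Xa \<in> TCT_maps" and Ha: "Ha \<in> N_set" shows "Xa \<circ> Ha \<circ> einv Xa \<in> N_set"
proof -
  obtain r where r: "radial_factor Ha r" and Hm: "Ha \<in> TCT_maps" using Ha by (auto simp: N_set_def)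
  note E = einv_props(1)[OF Xa]
  have v: "\<And>v. v \<in> punctured \<Longrightarrow> (Xa \<circ> Ha \<circ> einv Xa) v = r (einv Xa v) *\<^sub>R v"
  proof -
    fix v :: "real^'a" assume v: "v \<in> punctured"
    have w: "einv Xa v \<in> punctured" using TCT_in_punct[OF E v] .
    have "Ha (einv Xa v) = r (einv Xa v) *\<^sub>R einv Xa v" using rad_D(4)[OF r w] .
    then show "(Xa \<circ> Ha \<circ> einv Xa) v = r (einv Xa v) *\<^sub>R v"
      using TCT_D(5)[OF Xa w, of "r (einv Xa v)"] rad_D(2)[OF r w] einv_props(3)[OF Xa] by simp
  qed
  have sm: "smooth_on punctured (\<lambda>v. r (einv Xa v))"
    by (rule smooth_compose[OF open_punct open_punct _ TCT_D(2)[OF E] rad_D(1)[OF r]])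
       (use TCT_in_punct[OF E] in auto)
  have "radial_factor (Xa \<circ> Ha \<circ> einv Xa) (\<lambda>v. r (einv Xa v))"
    unfolding radial_factor_def
    using sm rad_D(2)[OF r] TCT_in_punct[OF E] v rad_D(3)[OF r] TCT_D(5)[OF E]
    by (simp add: mem_punct)
  moreover have "Xa \<circ> Ha \<circ> einv Xa \<in> TCT_maps" using TCT_comp[OF TCT_comp[OF Xa Hm] E] .
  ultimately show ?thesis by (auto simp: N_set_def)
qed

lemma N_sub: "subgroup (N_set :: (real^'n \<Rightarrow> real^'n) set) TCT_group"
proof (rule group.subgroupI[OF TCT_is_group])
  show "N_set \<subseteq> carrier TCT_group" by (auto simp: N_set_def)
  have "radial_factor id (\<lambda>x. 1)" unfolding radial_factor_def by (simp add: smooth_const)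
  then have "id \<in> N_set" using id_TCT by (auto simp: N_set_def)
  then show "N_set \<noteq> {}" by blast
  fix a :: "real^'n \<Rightarrow> real^'n" assume a: "a \<in> N_set"
  then have am: "a \<in> TCT_maps" by (simp add: N_set_def)
  show "inv\<^bsub>TCT_group\<^esub> a \<in> N_set" using TCT_inv[OF am] N_inv[OF a] by simp
next
  fix a b :: "real^'n \<Rightarrow> real^'n" assume "a \<in> N_set" "b \<in> N_set"
  then show "a \<otimes>\<^bsub>TCT_group\<^esub> b \<in> N_set" using N_mult by simp
qed

theorem proposition1:
  shows "(N_set :: (real^'n \<Rightarrow> real^'n) set) \<lhd> TCT_group
    \<and> comm_group (TCT_group\<lparr>carrier := (N_set :: (real^'n \<Rightarrow> real^'n) set)\<rparr>)
    \<and> (\<forall>g1\<in>(N_set :: (real^'n \<Rightarrow> real^'n) set). \<forall>g2\<in>(N_set :: (real^'n \<Rightarrow> real^'n) set). \<forall>r1 r2 r.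
          radial_factor g1 r1 \<longrightarrow> radial_factor g2 r2
          \<longrightarrow> radial_factor (g1 \<otimes>\<^bsub>TCT_group\<^esub> g2) r
          \<longrightarrow> (\<forall>x\<in>punctured. r x = r1 x * r2 x))
    \<and> (\<forall>g\<in>(N_set :: (real^'n \<Rightarrow> real^'n) set). \<forall>rg r.
          radial_factor g rg \<longrightarrow> radial_factor (inv\<^bsub>TCT_group\<^esub> g) r
          \<longrightarrow> (\<forall>x\<in>punctured. r x = 1 / rg x))"
proof (intro conjI)
  show "(N_set :: (real^'n \<Rightarrow> real^'n) set) \<lhd> TCT_group"
    unfolding group.normal_inv_iff[OF TCT_is_group]
    by (simp add: N_sub TCT_inv N_conj)
  show "comm_group (TCT_group\<lparr>carrier := (N_set :: (real^'n \<Rightarrow> real^'n) set)\<rparr>)"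
  proof (rule group.group_comm_groupI[OF subgroup.subgroup_is_group[OF N_sub TCT_is_group]])
    fix x y :: "real^'n \<Rightarrow> real^'n"
    assume "x \<in> carrier (TCT_group\<lparr>carrier := N_set\<rparr>)" "y \<in> carrier (TCT_group\<lparr>carrier := N_set\<rparr>)"
    then obtain rx ry where r: "radial_factor x rx" "radial_factor y ry" and m: "x \<in> TCT_maps" "y \<in> TCT_maps"
      by (auto simp: N_set_def)
    have "x \<circ> y = y \<circ> x"
    proof
      fix v :: "real^'n"
      show "(x \<circ> y) v = (y \<circ> x) v"
      proof (cases "v = 0")
        case True thus ?thesis using TCT_D(4)[OF m(1)] TCT_D(4)[OF m(2)] by simp
      next
        case False
        then have "v \<in> punctured" by (simp add: mem_punct)
        then show ?thesis using rad_comp[OF r(1,2)] rad_comp[OF r(2,1)] by (simp add: mult.commute)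
      qed
    qed
    then show "x \<otimes>\<^bsub>TCT_group\<lparr>carrier := N_set\<rparr>\<^esub> y = y \<otimes>\<^bsub>TCT_group\<lparr>carrier := N_set\<rparr>\<^esub> x"
      by (simp add: TCT_group_def)
  qed
  show "\<forall>g1\<in>(N_set :: (real^'n \<Rightarrow> real^'n) set). \<forall>g2\<in>(N_set :: (real^'n \<Rightarrow> real^'n) set). \<forall>r1 r2 r.
          radial_factor g1 r1 \<longrightarrow> radial_factor g2 r2
          \<longrightarrow> radial_factor (g1 \<otimes>\<^bsub>TCT_group\<^esub> g2) r
          \<longrightarrow> (\<forall>x\<in>punctured. r x = r1 x * r2 x)"
  proof (intro ballI allI impI)
    fix g1 g2 :: "real^'n \<Rightarrow> real^'n" and r1 r2 r and x :: "real^'n"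
    assume h: "radial_factor g1 r1" "radial_factor g2 r2" "radial_factor (g1 \<otimes>\<^bsub>TCT_group\<^esub> g2) r"
      and x: "x \<in> punctured"
    have x0: "x \<noteq> 0" using x by (simp add: mem_punct)
    show "r x = r1 x * r2 x"
      using rad_D(4)[OF h(3) x] rad_comp[OF h(1,2) x] x0 by auto
  qed
  show "\<forall>g\<in>(N_set :: (real^'n \<Rightarrow> real^'n) set). \<forall>rg r.
          radial_factor g rg \<longrightarrow> radial_factor (inv\<^bsub>TCT_group\<^esub> g) r
          \<longrightarrow> (\<forall>x\<in>punctured. r x = 1 / rg x)"
  proof (intro ballI allI impI)
    fix g :: "real^'n \<Rightarrow> real^'n" and rg r and x :: "real^'n"
    assume g: "g \<in> N_set" and h: "radial_factor g rg" "radial_factor (inv\<^bsub>TCT_group\<^esub> g) r"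
      and x: "x \<in> punctured"
    have gm: "g \<in> TCT_maps" using g by (simp add: N_set_def)
    have h2: "radial_factor (einv g) r" using h(2) TCT_inv[OF gm] by simp
    have "einv g (g x) = (r x * rg x) *\<^sub>R x" using rad_comp[OF h2 h(1) x] .
    then have "(r x * rg x) *\<^sub>R x = 1 *\<^sub>R x" using einv_props(2)[OF gm] by simp
    then have "r x * rg x = 1" using x by (simp only: scaleR_cancel_right mem_punct) simp
    moreover have "rg x > 0" using rad_D(2)[OF h(1) x] .
    ultimately show "r x = 1 / rg x" by (simp add: field_simps)
  qed
qed

end
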